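(* Let $u$ be a one-sided Sturmian sequence with left special sequence $l=l_1l_2\dots$, and let $xl_1l_2\dots l_{n-1}$ ($x\in\{0,1\}$) be a significant block of $\tilde X_u$. In the HB diagram of $X_u^+$, two arrows leave $xl_1l_2\dots l_{n-1}$ if and only if $xl_1l_2\dots l_{n-1}$ is a right special block, equivalently if and only if $xl_1l_2\dots l_{n-1}=l_nl_{n-1}\dots l_2l_1$.
   Context: A sequence $u\in\{0,1\}^{\mathbb N}$ is Sturmian if for every $n\ge1$ exactly $n+1$ distinct blocks of length $n$ occur in $u$. $X_u^+$ is the closure of $\{\sigma^n u:n\in\mathbb N\}$, $\sigma$ the shift $(\sigma x)_i=x_{i+1}$, and $\tilde X_u=\{x\in\{0,1\}^{\mathbb Z}: x_px_{p+1}\dots\in X_u^+\ \forall p\}$; the languages of $u$, $X_u^+$, $\tilde X_u$ coincide. For each $n$ there is a unique block $L_n$ of length $n$ with $0L_n$ and $1L_n$ in the language; these are the prefixes $L_n=l_1\dots l_n$ of the left special sequence $l$. A block $v$ is right special if both $v0$ and $v1$ are in the language. For a block $a_{-n}\dots a_0$ in the language, $\mathrm{fol}(a_{-n}\dots a_0)=\{b_0b_1\dots\in X_u^+:\exists b\in\tilde X_u,\ b_{-n}\dots b_0=a_{-n}\dots a_0\}$. A block $a_{-n}\dots a_0$ ($n\ge1$) is significant if $\mathrm{fol}(a_{-n}\dots a_0)\subsetneq\mathrm{fol}(a_{-n+1}\dots a_0)$; $0$ and $1$ are also significant. $\mathrm{sig}(\cdot)$ is the longest significant suffix. The HB diagram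 has vertex set the significant blocks and an arrow $\alpha\to\beta$ iff there is a symbol $b$ with $\alpha b$ in the language and $\beta=\mathrm{sig}(\alpha b)$. *)

theory Defs
  imports "HOL-Analysis.Analysis" "HOL-Library.Sublist"
begin

text \<open>Symbols are the natural numbers 0 and 1; one-sided sequences are nat => nat,
  two-sided sequences are int => nat, blocks are lists (written left to right).\<close>

definition lang :: "(nat \<Rightarrow> nat) \<Rightarrow> nat list set" where
  "lang u = {w. \<exists>i. w = map u [i..<i + length w]}"

definition sturmian :: "(nat \<Rightarrow> nat) \<Rightarrow> bool" where
  "sturmian u \<longleftrightarrow> range u \<subseteq> {0,1} \<and>
     (\<forall>n\<ge>1. card {w \<in> lang u. length w = n} = n + 1)"

definition shift :: "(nat \<Rightarrow> nat) \<Rightarrow> (nat \<Rightarrow> nat)" where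
  "shift x = (\<lambda>i. x (Suc i))"

text \<open>X_u^+ : closure (product topology on nat => nat, nat discrete) of the orbit of u.\<close>
definition Xplus :: "(nat \<Rightarrow> nat) \<Rightarrow> (nat \<Rightarrow> nat) set" where
  "Xplus u = closure {(shift ^^ n) u | n. True}"

definition Xtilde :: "(nat \<Rightarrow> nat) \<Rightarrow> (int \<Rightarrow> nat) set" where
  "Xtilde u = {x. \<forall>p::int. (\<lambda>i::nat. x (p + int i)) \<in> Xplus u}"

definition left_special_seq :: "(nat \<Rightarrow> nat) \<Rightarrow> (nat \<Rightarrow> nat) \<Rightarrow> bool" where
  "left_special_seq u l \<longleftrightarrow>
     (\<forall>n. 0 # map l [1..<n+1] \<in> lang u \<and> 1 # map l [1..<n+1] \<in> lang u)"

definition right_special :: "(nat \<Rightarrow> nat) \<Rightarrow> nat list \<Rightarrow> bool" where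
  "right_special u v \<longleftrightarrow> v @ [0] \<in> lang u \<and> v @ [1] \<in> lang u"

text \<open>fol(a_{-n} ... a_0) for a block w = [a_{-n},...,a_0] (length n+1).\<close>
definition fol :: "(nat \<Rightarrow> nat) \<Rightarrow> nat list \<Rightarrow> (nat \<Rightarrow> nat) set" where
  "fol u w = {c \<in> Xplus u. \<exists>b \<in> Xtilde u.
       (\<forall>j<length w. b (int j - int (length w - 1)) = w ! j) \<and>
       c = (\<lambda>i. b (int i))}"

definition significant :: "(nat \<Rightarrow> nat) \<Rightarrow> nat list \<Rightarrow> bool" where
  "significant u w \<longleftrightarrow> w \<in> lang u \<and>
     (w = [0] \<or> w = [1] \<or> (length w \<ge> 2 \<and> fol u w \<subset> fol u (tl w)))"

definition sig :: "(nat \<Rightarrow> nat) \<Rightarrow> nat list \<Rightarrow> nat list" where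
  "sig u w = (THE s. suffix s w \<and> significant u s \<and>
                 (\<forall>s'. suffix s' w \<and> significant u s' \<longrightarrow> length s' \<le> length s))"

definition HB_arrow :: "(nat \<Rightarrow> nat) \<Rightarrow> nat list \<Rightarrow> nat list \<Rightarrow> bool" where
  "HB_arrow u \<alpha> \<beta> \<longleftrightarrow> significant u \<alpha> \<and> significant u \<beta> \<and>
     (\<exists>b. \<alpha> @ [b] \<in> lang u \<and> \<beta> = sig u (\<alpha> @ [b]))"

end

theory Submission imports Defs begin

lemma lang_iff: "w \<in> lang u \<longleftrightarrow> (\<exists>i. \<forall>k<length w. w!k = u(i+k))"
proof
  assume "w \<in> lang u"
  then obtain i where "w = map u [i..<i + length w]" by (auto simp: lang_def)
  then have "\<forall>k<length w. w!k = u(i+k)"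
    by (metis add_diff_cancel_left' nth_map_upt)
  then show "\<exists>i. \<forall>k<length w. w!k = u(i+k)" by blast
next
  assume "\<exists>i. \<forall>k<length w. w!k = u(i+k)"
  then obtain i where h: "\<forall>k<length w. w!k = u(i+k)" by blast
  have "w = map u [i..<i + length w]"
    by (rule nth_equalityI) (auto simp: h nth_map_upt)
  then show "w \<in> lang u" by (auto simp: lang_def)
qed

lemma lang_occ: "map u [i..<i+n] \<in> lang u"
  by (auto simp: lang_def)

lemma lang_append1: "xs @ ys \<in> lang u \<Longrightarrow> xs \<in> lang u"
  unfolding lang_iff by (metis length_append nth_append trans_less_add1)

lemma lang_append2: "xs @ ys \<in> lang u \<Longrightarrow> ys \<in> lang u"
proof -
  assume "xs @ ys \<in> lang u"
  then obtain i where h: "\<forall>k<length (xs@ys). (xs@ys)!k = u(i+k)" unfolding lang_iff by blast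
  have "\<forall>k<length ys. ys!k = u((i + length xs)+k)"
  proof (intro allI impI)
    fix k assume "k < length ys"
    then show "ys!k = u((i + length xs)+k)"
      using h[rule_format, of "length xs + k"] by (simp add: nth_append add.assoc)
  qed
  then show ?thesis unfolding lang_iff by blast
qed

lemma lang_infix: "xs @ ys @ zs \<in> lang u \<Longrightarrow> ys \<in> lang u"
  using lang_append1 lang_append2 by metis

lemma lang_take: "w \<in> lang u \<Longrightarrow> take n w \<in> lang u"
  by (metis append_take_drop_id lang_append1)

lemma lang_drop: "w \<in> lang u \<Longrightarrow> drop n w \<in> lang u"
  by (metis append_take_drop_id lang_append2)

lemma lang_window: "w \<in> lang u \<Longrightarrow> take m (drop n w) \<in> lang u"
  by (simp add: lang_drop lang_take)

lemma lang_Nil: "[] \<in> lang u" unfolding lang_iff by simp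

lemma lang_ext: "w \<in> lang u \<Longrightarrow> \<exists>b. w @ [b] \<in> lang u"
proof -
  assume "w \<in> lang u"
  then obtain i where h: "\<forall>k<length w. w!k = u(i+k)" unfolding lang_iff by blast
  have "\<forall>k<length (w@[u(i+length w)]). (w@[u(i+length w)])!k = u(i+k)"
    using h by (auto simp: nth_append less_Suc_eq)
  then show ?thesis unfolding lang_iff by blast
qed

lemma lang_letters: "range u \<subseteq> {0,1} \<Longrightarrow> w \<in> lang u \<Longrightarrow> x \<in> set w \<Longrightarrow> x = 0 \<or> x = 1"
  unfolding lang_iff by (metis in_set_conv_nth insert_iff range_subsetD singletonD)

definition Fn :: "(nat \<Rightarrow> nat) \<Rightarrow> nat \<Rightarrow> nat list set" where
  "Fn v n = {w \<in> lang v. length w = n}"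

lemma Fn_finite: "range v \<subseteq> {0,1} \<Longrightarrow> finite (Fn v n)"
proof -
  assume r: "range v \<subseteq> {0,1}"
  have "Fn v n \<subseteq> {xs. set xs \<subseteq> {0,1} \<and> length xs = n}"
    using lang_letters[OF r] by (auto simp: Fn_def)
  moreover have "finite {xs. set xs \<subseteq> {0::nat,1} \<and> length xs = n}"
    by (rule finite_lists_length_eq) simp
  ultimately show ?thesis by (rule finite_subset)
qed

lemma Fn_0: "Fn v 0 = {[]}"
  by (auto simp: Fn_def lang_Nil)

lemma per_mod:
  fixes v :: "nat \<Rightarrow> nat" and t :: nat
  assumes P: "P \<ge> 1" and per: "\<forall>i\<ge>M. v(i+P) = v i"
  shows "v(M+t) = v(M + t mod P)"
proof (induction t rule: less_induct)
  case (less t)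
  show ?case
  proof (cases "t < P")
    case True then show ?thesis by simp
  next
    case False
    then have "v(M+t) = v(M+(t-P))" using per[rule_format, of "M+(t-P)"] by simp
    also have "\<dots> = v(M + (t-P) mod P)" using less[of "t-P"] P False by simp
    also have "(t-P) mod P = t mod P" using False by (simp add: mod_if)
    finally show ?thesis .
  qed
qed

lemma per_bound:
  assumes P: "P \<ge> 1" and per: "\<forall>i\<ge>M. v(i+P) = v i"
  shows "Fn v n \<subseteq> (\<lambda>i. map v [i..<i+n]) ` {..<M+P}"
proof
  fix w assume "w \<in> Fn v n"
  then obtain i where w: "w = map v [i..<i+n]" by (auto simp: Fn_def lang_def)
  show "w \<in> (\<lambda>i. map v [i..<i+n]) ` {..<M+P}"
  proof (cases "i < M + P")
    case True then show ?thesis using w by blast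
  next
    case False
    define i' where "i' = M + (i-M) mod P"
    have "i' < M + P" using P by (simp add: i'_def)
    have "map v [i..<i+n] = map v [i'..<i'+n]"
    proof (rule nth_equalityI)
      fix k assume "k < length (map v [i..<i+n])"
      then have k: "k < n" by simp
      have "v(i+k) = v(M + (i-M+k))" using False by (simp add: algebra_simps)
      also have "\<dots> = v(M + (i-M+k) mod P)" by (rule per_mod[OF P per])
      also have "(i-M+k) mod P = ((i-M) mod P + k) mod P" by (simp add: mod_add_left_eq)
      also have "v(M + ((i-M) mod P + k) mod P) = v(M + ((i-M) mod P + k))"
        by (rule per_mod[OF P per, symmetric])
      also have "M + ((i-M) mod P + k) = i' + k" by (simp add: i'_def)
      finally show "map v [i..<i+n] ! k = map v [i'..<i'+n] ! k" using k by (simp add: nth_map_upt)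
    qed simp
    then show ?thesis using w \<open>i' < M+P\<close> by blast
  qed
qed

lemma per_card:
  assumes P: "P \<ge> 1" and per: "\<forall>i\<ge>M. v(i+P) = v i"
  shows "card (Fn v n) \<le> M + P"
proof -
  have "card (Fn v n) \<le> card ((\<lambda>i. map v [i..<i+n]) ` {..<M+P})"
    by (rule card_mono) (simp, rule per_bound[OF P per])
  also have "\<dots> \<le> card {..<M+P}" by (rule card_image_le) simp
  finally show ?thesis by simp
qed

lemma butlast_Fn: "butlast ` Fn v (Suc k) = Fn v k"
proof
  show "butlast ` Fn v (Suc k) \<subseteq> Fn v k"
    by (auto simp: Fn_def butlast_conv_take lang_take)
next
  show "Fn v k \<subseteq> butlast ` Fn v (Suc k)"
  proof
    fix w assume "w \<in> Fn v k"
    then obtain b where "w @ [b] \<in> lang v" "length w = k" using lang_ext by (auto simp: Fn_def)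
    then show "w \<in> butlast ` Fn v (Suc k)"
      by (auto simp: Fn_def intro!: image_eqI[of _ _ "w@[b]"])
  qed
qed

lemma MH:
  assumes r: "range v \<subseteq> {0,1}" and c: "card (Fn v (Suc k)) \<le> card (Fn v k)"
  shows "\<exists>M P. P \<ge> 1 \<and> (\<forall>i\<ge>M. v(i+P) = v i)"
proof -
  have fin: "finite (Fn v (Suc k))" using Fn_finite[OF r] .
  have "card (butlast ` Fn v (Suc k)) = card (Fn v (Suc k))"
    using c card_image_le[OF fin, of butlast] butlast_Fn[of v k] by simp
  then have inj: "inj_on butlast (Fn v (Suc k))" using eq_card_imp_inj_on[OF fin] by blast
  have det: "v(i+k) = v(j+k)" if "map v [i..<i+k] = map v [j..<j+k]" for i j
  proof -
    have a: "map v [i..<i+Suc k] \<in> Fn v (Suc k)" "map v [j..<j+Suc k] \<in> Fn v (Suc k)"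
      using lang_occ[of v i "Suc k"] lang_occ[of v j "Suc k"] by (auto simp: Fn_def)
    have "butlast (map v [i..<i+Suc k]) = butlast (map v [j..<j+Suc k])"
      using that by (simp add: map_butlast[symmetric])
    then have "map v [i..<i+Suc k] = map v [j..<j+Suc k]" using inj a by (meson inj_onD)
    then show ?thesis by simp
  qed
  define f where "f i = map v [i..<i+k]" for i
  have "f ` {..card (Fn v k)} \<subseteq> Fn v k" by (auto simp: f_def Fn_def lang_occ)
  moreover have "\<not> card {..card (Fn v k)} \<le> card (Fn v k)" by simp
  ultimately have "\<not> inj_on f {..card (Fn v k)}"
    using card_inj_on_le[OF _ _ Fn_finite[OF r]] by blast
  then obtain i j where ij: "i \<noteq> j" "f i = f j" unfolding inj_on_def by blast
  then obtain i j where ij: "i < j" "f i = f j"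
    by (metis linorder_neqE_nat)
  have eq: "v(i+n) = v(j+n)" for n
  proof (induction n rule: less_induct)
    case (less n)
    show ?case
    proof (cases "n < k")
      case True
      then have "f i ! n = f j ! n" using ij by simp
      then show ?thesis using True by (simp add: f_def nth_map_upt)
    next
      case False
      have "map v [(i+(n-k))..<(i+(n-k))+k] = map v [(j+(n-k))..<(j+(n-k))+k]"
      proof (rule nth_equalityI)
        fix s assume "s < length (map v [i + (n - k)..<i + (n - k) + k])"
        then have s: "s < k" by simp
        have "v(i + (n-k+s)) = v(j + (n-k+s))" using less[of "n-k+s"] s False by simp
        then show "map v [i + (n - k)..<i + (n - k) + k] ! s = map v [j + (n - k)..<j + (n - k) + k] ! s"
          using s by (simp add: nth_map_upt add.assoc)
      qed simp
      then have "v(i+(n-k)+k) = v(j+(n-k)+k)" by (rule det)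
      then show ?thesis using False by simp
    qed
  qed
  have "\<forall>s\<ge>i. v(s+(j-i)) = v s"
  proof (intro allI impI)
    fix s assume "s \<ge> i"
    then show "v(s+(j-i)) = v s" using eq[of "s-i"] ij(1) by (simp add: add.commute)
  qed
  then show ?thesis using ij(1) by (intro exI[of _ i] exI[of _ "j-i"]) simp
qed

lemma win_rev:
  assumes "i + n \<le> length P"
  shows "take n (drop i (rev P)) = rev (take n (drop (length P - n - i) P))"
proof (rule nth_equalityI)
  show "length (take n (drop i (rev P))) = length (rev (take n (drop (length P - n - i) P)))"
    using assms by simp
next
  fix k assume "k < length (take n (drop i (rev P)))"
  then have k: "k < n" using assms by simp
  have "take n (drop i (rev P)) ! k = rev P ! (i+k)" using k assms by simp
  also have "\<dots> = P ! (length P - Suc (i+k))" using k assms by (simp add: rev_nth)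
  also have "\<dots> = rev (take n (drop (length P - n - i) P)) ! k"
    using k assms by (simp add: rev_nth min_def)
  finally show "take n (drop i (rev P)) ! k = rev (take n (drop (length P - n - i) P)) ! k" .
qed

lemma win_append: "i + n \<le> length X \<Longrightarrow> take n (drop i (X@Y)) = take n (drop i X)"
  by simp

lemma win_take: "i + n \<le> k \<Longrightarrow> take n (drop i (take k X)) = take n (drop i X)"
  by (simp add: drop_take take_take min_def)

lemma mod_pred: "(x::nat) mod p = 0 \<Longrightarrow> x \<ge> 1 \<Longrightarrow> p \<ge> 1 \<Longrightarrow> (x - 1) mod p = p - 1"
proof -
  assume a: "x mod p = 0" "x \<ge> 1" "p \<ge> 1"
  then obtain q where q: "x = p * q" by (metis mod_eq_0_iff_dvd dvdE)
  then have "q \<ge> 1" using a by (cases q) auto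
  then have "x - 1 = (p - 1) + p * (q - 1)" using q a(3)
    by (cases q) (auto simp: algebra_simps)
  then have "(x-1) mod p = (p - 1) mod p" by (simp only: mod_mult_self2)
  then show ?thesis using a(3) by simp
qed

definition legal :: "(nat \<Rightarrow> nat) \<Rightarrow> nat \<Rightarrow> nat list \<Rightarrow> bool" where
  "legal u m X \<longleftrightarrow> (\<forall>i. i + Suc m \<le> length X \<longrightarrow> take (Suc m) (drop i X) \<in> lang u)"

definition left_sp :: "(nat \<Rightarrow> nat) \<Rightarrow> nat list \<Rightarrow> bool" where
  "left_sp u v \<longleftrightarrow> 0 # v \<in> lang u \<and> 1 # v \<in> lang u"

locale sturm =
  fixes u :: "nat \<Rightarrow> nat"
  assumes st: "sturmian u"
begin

lemma rng: "range u \<subseteq> {0,1}" using st by (simp add: sturmian_def)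

lemma card_F: "card (Fn u n) = n + 1"
proof (cases "n = 0")
  case True then show ?thesis by (simp add: Fn_0)
next
  case False then show ?thesis using st by (simp add: sturmian_def Fn_def)
qed

lemma finF: "finite (Fn u n)" using Fn_finite[OF rng] .

lemma letter: "w \<in> lang u \<Longrightarrow> x \<in> set w \<Longrightarrow> x = 0 \<or> x = 1"
  using lang_letters[OF rng] by blast

lemma not_evper: "\<not> (P \<ge> 1 \<and> (\<forall>i\<ge>M. u(i+P) = u i))"
proof
  assume "P \<ge> 1 \<and> (\<forall>i\<ge>M. u(i+P) = u i)"
  then have "card (Fn u (M+P)) \<le> M + P" by (intro per_card) auto
  then show False using card_F[of "M+P"] by simp
qed

lemma recur:
  assumes v: "v \<in> lang u"
  shows "\<exists>j\<ge>N. \<forall>k<length v. v!k = u(j+k)"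
proof (rule ccontr)
  assume no: "\<not> (\<exists>j\<ge>N. \<forall>k<length v. v!k = u(j+k))"
  define u' where "u' i = u(N+i)" for i
  have r': "range u' \<subseteq> {0,1}"
  proof -
    have "u (N+i) \<in> {0,1}" for i using rng by (meson range_subsetD)
    then show ?thesis unfolding u'_def by (metis (no_types, lifting) image_subsetI)
  qed
  have sub: "Fn u' n \<subseteq> Fn u n" for n
  proof
    fix w assume "w \<in> Fn u' n"
    then obtain i where "\<forall>k<length w. w!k = u(N+i+k)" "length w = n"
      by (auto simp: Fn_def lang_iff u'_def add.assoc)
    then show "w \<in> Fn u n" by (auto simp: Fn_def lang_iff)
  qed
  obtain j0 where j0: "\<forall>k<length v. v!k = u(j0+k)" using v by (auto simp: lang_iff)
  have "j0 < N"
  proof (rule ccontr)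
    assume "\<not> j0 < N"
    then have "j0 \<ge> N" by simp
    then show False using no j0 by blast
  qed
  define n0 where "n0 = N + length v"
  define x where "x = map u [0..<n0]"
  have xF: "x \<in> Fn u n0" using lang_occ[of u 0 n0] by (simp add: Fn_def x_def)
  have "x \<notin> Fn u' n0"
  proof
    assume "x \<in> Fn u' n0"
    then obtain i where i: "\<forall>k<n0. x!k = u(N+i+k)" by (auto simp: Fn_def lang_iff u'_def add.assoc)
    have "\<forall>k<length v. v!k = u((N+i+j0)+k)"
    proof (intro allI impI)
      fix k assume k: "k < length v"
      then have "j0 + k < n0" using \<open>j0 < N\<close> by (simp add: n0_def)
      then have "x!(j0+k) = u(N+i+(j0+k))" using i by blast
      moreover have "x!(j0+k) = u(j0+k)" using \<open>j0+k<n0\<close> by (simp add: x_def)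
      ultimately show "v!k = u((N+i+j0)+k)" using j0 k by (simp add: add.assoc)
    qed
    moreover have "N+i+j0 \<ge> N" by simp
    ultimately show False using no by blast
  qed
  then have "Fn u' n0 \<subset> Fn u n0" using sub xF by blast
  then have "card (Fn u' n0) < card (Fn u n0)" by (rule psubset_card_mono[OF finF])
  then have c0: "card (Fn u' n0) \<le> n0" using card_F[of n0] by simp
  have "\<exists>k. card (Fn u' (Suc k)) \<le> card (Fn u' k)"
  proof (rule ccontr)
    assume "\<not> ?thesis"
    then have inc: "card (Fn u' (Suc k)) > card (Fn u' k)" for k by (simp add: not_le)
    have lb: "card (Fn u' k) \<ge> k + 1" for k
    proof (induction k)
      case 0 then show ?case by (simp add: Fn_0)
    next
      case (Suc k) then show ?case using inc[of k] by simp
    qed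
    show False using lb[of n0] c0 by simp
  qed
  then obtain k where "card (Fn u' (Suc k)) \<le> card (Fn u' k)" by blast
  from MH[OF r' this] obtain M P where MP: "P \<ge> 1" "\<forall>i\<ge>M. u'(i+P) = u' i" by blast
  have "\<forall>i\<ge>N+M. u(i+P) = u i"
  proof (intro allI impI)
    fix i assume "i \<ge> N+M"
    then show "u(i+P) = u i" using MP(2)[rule_format, of "i-N"] by (simp add: u'_def)
  qed
  then show False using not_evper MP(1) by blast
qed

lemma left_ext: "v \<in> lang u \<Longrightarrow> \<exists>a. a # v \<in> lang u"
proof -
  assume "v \<in> lang u"
  from recur[OF this, of 1] obtain j where j: "j \<ge> 1" "\<forall>k<length v. v!k = u(j+k)" by blast
  have "\<forall>k<length (u(j-1) # v). (u(j-1) # v)!k = u((j-1)+k)"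
    using j by (auto simp: nth_Cons split: nat.split)
  then show ?thesis unfolding lang_iff by blast
qed


lemma two_letters: "x \<in> {0,1::nat} \<Longrightarrow> y \<in> {0,1} \<Longrightarrow> x \<noteq> y \<Longrightarrow> (x = 0 \<and> y = 1) \<or> (x = 1 \<and> y = 0)"
  by auto

lemma RS_unique:
  assumes v: "right_special u v" and v': "right_special u v'" and l: "length v = length v'"
  shows "v = v'"
proof (rule ccontr)
  assume ne: "v \<noteq> v'"
  define n where "n = length v"
  define T where "T = Fn u (Suc n) - {v@[0], v'@[0]}"
  have sub2: "{v@[0], v'@[0]} \<subseteq> Fn u (Suc n)" using v v' l by (auto simp: right_special_def Fn_def n_def)
  have c2: "card {v@[0], v'@[0]} = 2" using ne by simp
  have cT: "card T = n + 2 - 2" unfolding T_def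
    using card_Diff_subset[OF _ sub2] c2 card_F[of "Suc n"] by simp
  have "Fn u n \<subseteq> butlast ` T"
  proof
    fix z assume z: "z \<in> Fn u n"
    show "z \<in> butlast ` T"
    proof (cases "z = v \<or> z = v'")
      case True
      then have "z@[1] \<in> T" using v v' l by (auto simp: T_def right_special_def Fn_def n_def)
      then show ?thesis by (metis butlast_snoc image_eqI)
    next
      case False
      obtain b where "z@[b] \<in> lang u" using z lang_ext by (auto simp: Fn_def)
      then have "z@[b] \<in> T" using z False by (auto simp: T_def Fn_def)
      then show ?thesis by (metis butlast_snoc image_eqI)
    qed
  qed
  then have "card (Fn u n) \<le> card (butlast ` T)"
    by (rule card_mono[rotated]) (simp add: T_def finF)
  also have "\<dots> \<le> card T" by (rule card_image_le) (simp add: T_def finF)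
  finally show False using cT card_F[of n] by simp
qed

lemma LS_unique:
  assumes v: "left_sp u v" and v': "left_sp u v'" and l: "length v = length v'"
  shows "v = v'"
proof (rule ccontr)
  assume ne: "v \<noteq> v'"
  define n where "n = length v"
  define T where "T = Fn u (Suc n) - {0#v, 0#v'}"
  have sub2: "{0#v, 0#v'} \<subseteq> Fn u (Suc n)" using v v' l by (auto simp: left_sp_def Fn_def n_def)
  have c2: "card {0#v, 0#v'} = 2" using ne by simp
  have cT: "card T = n + 2 - 2" unfolding T_def
    using card_Diff_subset[OF _ sub2] c2 card_F[of "Suc n"] by simp
  have "Fn u n \<subseteq> tl ` T"
  proof
    fix z assume z: "z \<in> Fn u n"
    show "z \<in> tl ` T"
    proof (cases "z = v \<or> z = v'")
      case True
      then have "1#z \<in> T" using v v' l by (auto simp: T_def left_sp_def Fn_def n_def)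
      then show ?thesis by (metis list.sel(3) image_eqI)
    next
      case False
      obtain b where "b#z \<in> lang u" using z left_ext by (auto simp: Fn_def)
      then have "b#z \<in> T" using z False by (auto simp: T_def Fn_def)
      then show ?thesis by (metis list.sel(3) image_eqI)
    qed
  qed
  then have "card (Fn u n) \<le> card (tl ` T)"
    by (rule card_mono[rotated]) (simp add: T_def finF)
  also have "\<dots> \<le> card T" by (rule card_image_le) (simp add: T_def finF)
  finally show False using cT card_F[of n] by simp
qed

lemma uR: "v@[x] \<in> lang u \<Longrightarrow> v@[y] \<in> lang u \<Longrightarrow> x \<noteq> y \<Longrightarrow> right_special u v"
proof -
  assume a: "v@[x] \<in> lang u" "v@[y] \<in> lang u" "x \<noteq> y"
  have "x = 0 \<or> x = 1" "y = 0 \<or> y = 1" using a letter by auto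
  then show ?thesis using a by (auto simp: right_special_def)
qed

lemma uL: "x#v \<in> lang u \<Longrightarrow> y#v \<in> lang u \<Longrightarrow> x \<noteq> y \<Longrightarrow> left_sp u v"
proof -
  assume a: "x#v \<in> lang u" "y#v \<in> lang u" "x \<noteq> y"
  have "x = 0 \<or> x = 1" "y = 0 \<or> y = 1" using a letter by auto
  then show ?thesis using a by (auto simp: left_sp_def)
qed

lemma linegraph:
  assumes a: "a#v \<in> lang u" and b: "v@[b] \<in> lang u" and ns: "\<not> (right_special u v \<and> left_sp u v)"
  shows "a#v@[b] \<in> lang u"
proof (cases "right_special u v")
  case False
  obtain c where c: "(a#v)@[c] \<in> lang u" using lang_ext[OF a] by blast
  then have "v@[c] \<in> lang u" using lang_append2[of "[a]" "v@[c]"] by simp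
  then have "c = b" using uR[OF b] False by metis
  then show ?thesis using c by simp
next
  case True
  then have nl: "\<not> left_sp u v" using ns by simp
  obtain c where c: "c#v@[b] \<in> lang u" using left_ext[OF b] by blast
  then have "c#v \<in> lang u" using lang_append1[of "c#v" "[b]"] by simp
  then have "c = a" using uL[OF a] nl by metis
  then show ?thesis using c by simp
qed

lemma BL0:
  assumes len: "length w = m" and wL: "left_sp u w"
  and X: "legal u m X" "take m X = w" "length X \<ge> m"
         "\<forall>i. 0 < i \<and> i + m \<le> length X \<longrightarrow> take m (drop i X) \<noteq> w"
  and Y: "legal u m Y" "take m Y = w" "length Y \<ge> m"
         "\<forall>i. 0 < i \<and> i + m \<le> length Y \<longrightarrow> take m (drop i Y) \<noteq> w"
  and lst: "drop (length X - m) X = drop (length Y - m) Y"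
  and le: "length X \<le> length Y"
  shows "X = Y"
proof -
  have key: "k \<le> length X \<Longrightarrow> drop (length X - k) X = drop (length Y - k) Y" for k
  proof (induction k)
    case 0 then show ?case by simp
  next
    case (Suc k)
    show ?case
    proof (cases "Suc k \<le> m")
      case True
      have "drop (length X - Suc k) X = drop (m - Suc k) (drop (length X - m) X)"
        using True X(3) by simp
      also have "\<dots> = drop (m - Suc k) (drop (length Y - m) Y)" using lst by simp
      also have "\<dots> = drop (length Y - Suc k) Y" using True Y(3) by simp
      finally show ?thesis .
    next
      case False
      define i where "i = length X - Suc k"
      define j where "j = length Y - Suc k"
      have ih: "drop (length X - k) X = drop (length Y - k) Y" using Suc by simp
      have si: "Suc i = length X - k" "i < length X" using Suc.prems by (auto simp: i_def)
      have sj: "Suc j = length Y - k" "j < length Y" using Suc.prems le by (auto simp: j_def)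
      have dX: "drop i X = X!i # drop (length X - k) X"
        using Cons_nth_drop_Suc[OF si(2)] si(1) by simp
      have dY: "drop j Y = Y!j # drop (length Y - k) Y"
        using Cons_nth_drop_Suc[OF sj(2)] sj(1) by simp
      define v where "v = take m (drop (length X - k) X)"
      have lv: "length v = m" using False Suc.prems by (simp add: v_def)
      have "v \<noteq> w" using X(4)[rule_format, of "length X - k"] False Suc.prems
        by (simp add: v_def)
      have "take (Suc m) (drop i X) \<in> lang u" using X(1) False Suc.prems
        by (simp add: legal_def i_def)
      then have 1: "X!i # v \<in> lang u" by (simp add: dX v_def)
      have "take (Suc m) (drop j Y) \<in> lang u" using Y(1) False Suc.prems le
        by (simp add: legal_def j_def)
      then have 2: "Y!j # v \<in> lang u" by (simp add: dY v_def ih)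
      have "X!i = Y!j"
      proof (rule ccontr)
        assume "X!i \<noteq> Y!j"
        then have "left_sp u v" using uL[OF 1 2] by simp
        then have "v = w" using LS_unique[OF _ wL] lv len by simp
        then show False using \<open>v \<noteq> w\<close> by simp
      qed
      then show ?thesis using dX dY ih by (simp add: i_def j_def)
    qed
  qed
  have "X = drop (length Y - length X) Y" using key[of "length X"] by simp
  show "X = Y"
  proof (cases "length Y - length X = 0")
    case True then show ?thesis using \<open>X = drop (length Y - length X) Y\<close> by simp
  next
    case False
    have "take m (drop (length Y - length X) Y) = w" using X(2) \<open>X = drop (length Y - length X) Y\<close> by simp
    moreover have "length Y - length X + m \<le> length Y" using X(3) le by simp
    ultimately show ?thesis using Y(4) False by auto
  qed
qed

lemma BL:
  assumes len: "length w = m" and wL: "left_sp u w"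
  and X: "legal u m X" "take m X = w" "length X \<ge> m"
         "\<forall>i. 0 < i \<and> i + m \<le> length X \<longrightarrow> take m (drop i X) \<noteq> w"
  and Y: "legal u m Y" "take m Y = w" "length Y \<ge> m"
         "\<forall>i. 0 < i \<and> i + m \<le> length Y \<longrightarrow> take m (drop i Y) \<noteq> w"
  and lst: "drop (length X - m) X = drop (length Y - m) Y"
  shows "X = Y"
proof (cases "length X \<le> length Y")
  case True then show ?thesis using BL0[OF len wL X Y lst] by simp
next
  case False then show ?thesis using BL0[OF len wL Y X lst[symmetric]] by simp
qed


lemma legal_snoc:
  assumes X: "legal u m X" and lx: "length X \<ge> m"
  and b: "drop (length X - m) X @ [b] \<in> lang u"
  shows "legal u m (X@[b])"
  unfolding legal_def
proof (intro allI impI)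
  fix i assume i: "i + Suc m \<le> length (X@[b])"
  show "take (Suc m) (drop i (X@[b])) \<in> lang u"
  proof (cases "i + Suc m \<le> length X")
    case True then show ?thesis using X by (simp add: legal_def)
  next
    case False
    then have "i = length X - m" using i lx by simp
    then show ?thesis using b lx by simp
  qed
qed

lemma legal_take: "legal u m X \<Longrightarrow> legal u m (take n X)"
  unfolding legal_def by (metis length_take min.bounded_iff win_take)

lemma legal_win: "legal u m X \<Longrightarrow> i + m < length X \<Longrightarrow> take m (drop i X) \<in> lang u"
proof -
  assume "legal u m X" "i + m < length X"
  then have "take (Suc m) (drop i X) \<in> lang u" by (simp add: legal_def)
  then have "take m (take (Suc m) (drop i X)) \<in> lang u" by (rule lang_take)
  then show ?thesis by (simp add: min_def)
qed

lemma legal_last: "legal u m X \<Longrightarrow> length X \<ge> Suc m \<Longrightarrow> drop (length X - m) X \<in> lang u"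
proof -
  assume a: "legal u m X" "length X \<ge> Suc m"
  have "take (Suc m) (drop (length X - Suc m) X) \<in> lang u"
    using a(1)[unfolded legal_def, rule_format, of "length X - Suc m"] a(2) by simp
  then have "drop (length X - Suc m) X \<in> lang u" using a(2) by simp
  then have "drop 1 (drop (length X - Suc m) X) \<in> lang u" by (rule lang_drop)
  then show ?thesis using a(2) by (simp add: Suc_diff_Suc)
qed

definition isPath :: "(nat \<Rightarrow> nat) \<Rightarrow> nat list \<Rightarrow> nat \<Rightarrow> nat list \<Rightarrow> bool" where
  "isPath v w c P \<longleftrightarrow> legal v (length w) P \<and> take (Suc (length w)) P = w@[c]
     \<and> length P \<ge> Suc (length w) \<and> drop (length P - length w) P = w
     \<and> (\<forall>i. 0 < i \<and> i + length w < length P \<longrightarrow> take (length w) (drop i P) \<noteq> w)"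

lemma path_ex:
  assumes len: "length w = m" and wL: "left_sp u w" and wc: "w@[c] \<in> lang u"
  shows "\<exists>P. isPath u w c P"
proof -
  define S where "S = {X. legal u m X \<and> take (Suc m) X = w@[c] \<and> length X \<ge> Suc m \<and>
     (\<forall>i. 0 < i \<and> i + m \<le> length X \<longrightarrow> take m (drop i X) \<noteq> w)}"
  have inj: "inj_on (\<lambda>X. drop (length X - m) X) S"
  proof (rule inj_onI)
    fix X Y assume "X \<in> S" "Y \<in> S" "drop (length X - m) X = drop (length Y - m) Y"
    moreover have "take m X = w" if "take (Suc m) X = w@[c]" for X
    proof -
      have "take m (take (Suc m) X) = take m (w@[c])" by (simp only: that)
      then show ?thesis using len by (simp add: min_def)
    qed
    ultimately show "X = Y" using BL[OF len wL] unfolding S_def by auto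
  qed
  have "(\<lambda>X. drop (length X - m) X) ` S \<subseteq> Fn u m"
  proof
    fix z assume "z \<in> (\<lambda>X. drop (length X - m) X) ` S"
    then obtain X where X: "X \<in> S" "z = drop (length X - m) X" by blast
    then have "drop (length X - m) X \<in> lang u"
      using legal_last[of m X] by (simp add: S_def)
    then show "z \<in> Fn u m" using X by (auto simp add: Fn_def S_def)
  qed
  then have "finite ((\<lambda>X. drop (length X - m) X) ` S)" using finF finite_subset by blast
  then have finS: "finite S" using finite_imageD inj by blast
  have "finite (length ` S)" using finS by simp
  then obtain B where "\<forall>x\<in>length ` S. x < B" using finite_nat_set_iff_bounded by blast
  then have B: "\<forall>X\<in>S. length X < B" by blast
  have step: "(\<exists>P. isPath u w c P) \<or> (\<exists>X\<in>S. length X = Suc m + k)" for k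
  proof (induction k)
    case 0
    let ?X = "w@[c]"
    have lx: "legal u m ?X" unfolding legal_def
    proof (intro allI impI)
      fix i assume "i + Suc m \<le> length ?X"
      then have "i = 0" using len by simp
      then show "take (Suc m) (drop i ?X) \<in> lang u" using wc len by simp
    qed
    show ?case
    proof (cases "take m (drop 1 ?X) = w")
      case True
      have "isPath u w c ?X" unfolding isPath_def using lx len True by auto
      then show ?thesis by blast
    next
      case False
      have "?X \<in> S" unfolding S_def
      proof (intro CollectI conjI allI impI)
        fix i assume i: "0 < i \<and> i + m \<le> length ?X"
        then have "i = 1" using len by simp
        then show "take m (drop i ?X) \<noteq> w" using False by simp
      qed (use lx len in auto)
      moreover have "length ?X = Suc m + 0" using len by simp
      ultimately show ?thesis by blast
    qed
  next
    case (Suc k)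
    show ?case
    proof (cases "\<exists>P. isPath u w c P")
      case True then show ?thesis by blast
    next
      case False
      then obtain X where X: "X \<in> S" "length X = Suc m + k" using Suc.IH by blast
      have xs: "legal u m X" "take (Suc m) X = w@[c]" "length X \<ge> Suc m"
         "\<forall>i. 0 < i \<and> i + m \<le> length X \<longrightarrow> take m (drop i X) \<noteq> w" using X(1) by (auto simp: S_def)
      have "drop (length X - m) X \<in> lang u" using legal_last[OF xs(1) xs(3)] .
      then obtain b where b: "drop (length X - m) X @ [b] \<in> lang u" using lang_ext by blast
      let ?X = "X@[b]"
      have l2: "legal u m ?X" using legal_snoc[OF xs(1) _ b] xs(3) by simp
      have t2: "take (Suc m) ?X = w@[c]" using xs(2,3) by simp
      have int: "take m (drop i ?X) \<noteq> w" if "0 < i" "i + m \<le> length X" for i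
        using xs(4) that by simp
      show ?thesis
      proof (cases "drop (length ?X - m) ?X = w")
        case True
        have "isPath u w c ?X" unfolding isPath_def using l2 t2 xs(3) True len int
          by (auto simp del: take_append drop_append)
        then show ?thesis by blast
      next
        case False
        have "?X \<in> S" unfolding S_def
        proof (intro CollectI conjI allI impI)
          fix i assume i: "0 < i \<and> i + m \<le> length ?X"
          show "take m (drop i ?X) \<noteq> w"
          proof (cases "i + m \<le> length X")
            case True then show ?thesis using int i by blast
          next
            case False
            then have "i = length ?X - m" using i by simp arith
            moreover have "length (drop (length ?X - m) ?X) = m" using xs(3) by simp
            ultimately show ?thesis using \<open>drop (length ?X - m) ?X \<noteq> w\<close> by simp
          qed
        qed (use l2 t2 xs(3) in auto)
        moreover have "length ?X = Suc m + Suc k" using X(2) by simp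
        ultimately show ?thesis by blast
      qed
    qed
  qed
  from step[of B] B show ?thesis by auto
qed


lemma pref_eq:
  assumes len: "length w = m" and wL: "left_sp u w"
  and Z1: "legal u m Z1" "take m Z1 = w" "length Z1 = m + p" "\<forall>i. 0<i \<and> i<p \<longrightarrow> take m (drop i Z1) \<noteq> w"
  and Z2: "legal u m Z2" "take m Z2 = w" "length Z2 = m + p" "\<forall>i. 0<i \<and> i<p \<longrightarrow> take m (drop i Z2) \<noteq> w"
  and j: "j1 < p" "j2 < p" "take m (drop j1 Z1) = take m (drop j2 Z2)"
  shows "take (j1+m) Z1 = take (j2+m) Z2"
proof (rule BL[OF len wL])
  show "legal u m (take (j1+m) Z1)" "legal u m (take (j2+m) Z2)" using Z1(1) Z2(1) legal_take by auto
  show "take m (take (j1+m) Z1) = w" "take m (take (j2+m) Z2) = w" using Z1(2) Z2(2) by (auto simp: min_def)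
  show "length (take (j1+m) Z1) \<ge> m" "length (take (j2+m) Z2) \<ge> m" using Z1(3) Z2(3) j by auto
  show "\<forall>i. 0 < i \<and> i + m \<le> length (take (j1+m) Z1) \<longrightarrow> take m (drop i (take (j1+m) Z1)) \<noteq> w"
  proof (intro allI impI)
    fix i assume i: "0 < i \<and> i + m \<le> length (take (j1+m) Z1)"
    then have "i \<le> j1" "i + m \<le> j1 + m" using Z1(3) j by auto
    then show "take m (drop i (take (j1+m) Z1)) \<noteq> w" using win_take[of i m "j1+m" Z1] Z1(4) i j by auto
  qed
  show "\<forall>i. 0 < i \<and> i + m \<le> length (take (j2+m) Z2) \<longrightarrow> take m (drop i (take (j2+m) Z2)) \<noteq> w"
  proof (intro allI impI)
    fix i assume i: "0 < i \<and> i + m \<le> length (take (j2+m) Z2)"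
    then have "i \<le> j2" "i + m \<le> j2 + m" using Z2(3) j by auto
    then show "take m (drop i (take (j2+m) Z2)) \<noteq> w" using win_take[of i m "j2+m" Z2] Z2(4) i j by auto
  qed
  have "length (take (j1+m) Z1) - m = j1" "length (take (j2+m) Z2) - m = j2" using Z1(3) Z2(3) j by auto
  then show "drop (length (take (j1+m) Z1) - m) (take (j1+m) Z1) = drop (length (take (j2+m) Z2) - m) (take (j2+m) Z2)"
    using j(3) by (simp add: drop_take)
qed

lemma path_basic:
  assumes P: "isPath u w c P" and len: "length w = m"
  shows "take m P = w" "P!m = c" "drop (length P - m) P = w" "length P \<ge> Suc m"
    "\<And>i. i < m \<Longrightarrow> P!(i + (length P - m)) = P!i" "legal u m P"
    "\<And>i. 0 < i \<Longrightarrow> i < length P - m \<Longrightarrow> take m (drop i P) \<noteq> w"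
proof -
  have t: "take (Suc m) P = w@[c]" and l: "length P \<ge> Suc m" and d: "drop (length P - m) P = w"
    using P len by (auto simp: isPath_def)
  show tm: "take m P = w"
  proof -
    have "take m (take (Suc m) P) = take m (w@[c])" by (simp only: t)
    then show ?thesis using len by (simp add: min_def)
  qed
  have "(take (Suc m) P)!m = (w@[c])!m" by (simp only: t)
  then show "P!m = c" using len by (simp add: nth_append)
  show "drop (length P - m) P = w" "length P \<ge> Suc m" using d l by auto
  show "legal u m P" using P len by (simp add: isPath_def)
  fix i assume i: "i < m"
  have "P!(i + (length P - m)) = (drop (length P - m) P)!i" using i l by (simp add: add.commute)
  also have "\<dots> = w!i" using d by simp
  also have "\<dots> = P!i" using tm i by (metis nth_take)
  finally show "P!(i + (length P - m)) = P!i" .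
next
  fix i assume "0 < i" "i < length P - m"
  then show "take m (drop i P) \<noteq> w" using P len by (auto simp: isPath_def)
qed

lemma Pmod:
  assumes P: "isPath u w c P" and len: "length w = m" and t: "t < length P"
  shows "P!t = P!(t mod (length P - m))"
  using t
proof (induction t rule: less_induct)
  case (less t)
  define p where "p = length P - m"
  have p1: "p \<ge> 1" using path_basic(4)[OF P len] by (simp add: p_def)
  show ?case
  proof (cases "t < p")
    case True then show ?thesis by (simp add: p_def)
  next
    case False
    then have "t - p < m" using less.prems by (simp add: p_def)
    then have "P!t = P!(t-p)" using path_basic(5)[OF P len, of "t-p"] False by (simp add: p_def)
    also have "\<dots> = P!((t-p) mod p)" using less.IH[of "t-p"] p1 less.prems False by (simp add: p_def)
    also have "(t-p) mod p = t mod p" using False by (simp add: mod_if)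
    finally show ?thesis by (simp add: p_def)
  qed
qed


lemma return_letter:
  assumes P: "isPath u w c P" and len: "length w = m" and wL: "left_sp u w"
  and rc: "\<forall>z\<in>lang u. length z = Suc m \<longrightarrow> rev z \<in> lang u" and pal: "rev w = w"
  shows "P!(length P - m - 1) = c"
proof (rule ccontr)
  assume ne: "P!(length P - m - 1) \<noteq> c"
  define n where "n = length P"
  define p where "p = n - m"
  define Q where "Q = rev P"
  note pb = path_basic[OF P len]
  have p1: "p \<ge> 1" and nmp: "n = m + p" using pb(4) by (auto simp: p_def n_def)
  have lQ: "length Q = m + p" using nmp by (simp add: Q_def n_def)
  have q1: "legal u m Q" unfolding legal_def
  proof (intro allI impI)
    fix i assume i: "i + Suc m \<le> length Q"
    then have e: "take (Suc m) (drop i Q) = rev (take (Suc m) (drop (n - Suc m - i) P))"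
      using win_rev[of i "Suc m" P] by (simp add: Q_def n_def)
    have "take (Suc m) (drop (n - Suc m - i) P) \<in> lang u"
      using pb(6) i lQ nmp by (simp add: legal_def n_def)
    moreover have "length (take (Suc m) (drop (n - Suc m - i) P)) = Suc m" using i lQ nmp by (simp add: n_def)
    ultimately show "take (Suc m) (drop i Q) \<in> lang u" using rc e by simp
  qed
  have q2: "take m Q = w"
  proof -
    have "take m (drop 0 Q) = rev (take m (drop (n - m - 0) P))"
      using win_rev[of 0 m P] nmp by (simp add: Q_def n_def)
    moreover have "take m (drop (n - m) P) = w" using pb(3) len by (simp add: n_def)
    ultimately show ?thesis using pal by simp
  qed
  have q3: "Q!m = P!(p-1)"
    using nmp p1 by (simp add: Q_def rev_nth n_def p_def)
  have q4: "take m (drop i Q) \<noteq> w" if i: "0 < i" "i < p" for i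
  proof
    assume h: "take m (drop i Q) = w"
    have "take m (drop i Q) = rev (take m (drop (n - m - i) P))"
      using win_rev[of i m P] i nmp by (simp add: Q_def n_def)
    then have "rev (take m (drop (n - m - i) P)) = w" using h by simp
    then have "take m (drop (n - m - i) P) = rev w" by (metis rev_rev_ident)
    then have "take m (drop (p - i) P) = w" using pal by (simp add: p_def)
    moreover have "0 < p - i" "p - i < length P - m" using i nmp by (auto simp: n_def p_def)
    ultimately show False using pb(7) by blast
  qed
  have q5: "Q!(i + p) = Q!i" if i: "i < m" for i
  proof -
    have "take m (drop p Q) = rev (take m (drop (n - m - p) P))"
      using win_rev[of p m P] nmp by (simp add: Q_def n_def)
    also have "\<dots> = w" using pb(1) pal nmp by (simp add: n_def p_def)
    finally have "take m (drop p Q) = w" .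
    then have "w!i = (take m (drop p Q))!i" by simp
    also have "\<dots> = Q!(p+i)" using i lQ by simp
    finally have "Q!(p + i) = w!i" by simp
    also have "w!i = (take m Q)!i" using q2 by simp
    also have "\<dots> = Q!i" using i by simp
    finally show ?thesis by (simp add: add.commute)
  qed
  have Pm: "P!m = c" using pb(2) .
  have Qm: "Q!m \<noteq> c" using q3 ne by (simp add: p_def n_def)
  have pgt: "p > m"
  proof (rule ccontr)
    assume "\<not> p > m"
    then have "m - p < m" "m - p + p = m" using p1 by auto
    then have "P!m = P!(m-p)" "Q!m = Q!(m-p)"
      using pb(5)[of "m-p"] q5[of "m-p"] by (simp_all add: p_def n_def)
    moreover have "P!(m-p) = Q!(m-p)"
    proof -
      have "P!(m-p) = (take m P)!(m-p)" using \<open>m - p < m\<close> by simp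
      also have "\<dots> = (take m Q)!(m-p)" using pb(1) q2 by simp
      also have "\<dots> = Q!(m-p)" using \<open>m - p < m\<close> by simp
      finally show ?thesis .
    qed
    ultimately show False using Pm Qm by simp
  qed
  have PZ: "legal u m P" "take m P = w" "length P = m + p" "\<forall>i. 0<i \<and> i<p \<longrightarrow> take m (drop i P) \<noteq> w"
    using pb(6) pb(1) nmp pb(7) by (auto simp: n_def p_def)
  have QZ: "legal u m Q" "take m Q = w" "length Q = m + p" "\<forall>i. 0<i \<and> i<p \<longrightarrow> take m (drop i Q) \<noteq> w"
    using q1 q2 lQ q4 by auto
  define G where "G j = (if j < p then take m (drop j P) else take m (drop (j - p + 1) Q))" for j
  have Gin: "G ` {..<2*p-1} \<subseteq> Fn u m"
  proof
    fix z assume "z \<in> G ` {..<2*p-1}"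
    then obtain j where j: "j < 2*p-1" "z = G j" by blast
    show "z \<in> Fn u m"
    proof (cases "j < p")
      case True
      then have "take m (drop j P) \<in> lang u" using legal_win[OF PZ(1)] PZ(3) by simp
      then show ?thesis using j True PZ(3) by (simp add: G_def Fn_def)
    next
      case False
      then have "take m (drop (j-p+1) Q) \<in> lang u" using legal_win[OF QZ(1)] QZ(3) j by simp
      then show ?thesis using j False QZ(3) by (simp add: G_def Fn_def)
    qed
  qed
  have Ginj: "inj_on G {..<2*p-1}"
  proof (rule inj_onI)
    fix j j' assume j: "j \<in> {..<2*p-1}" "j' \<in> {..<2*p-1}" "G j = G j'"
    show "j = j'"
    proof (cases "j < p"; cases "j' < p")
      assume "j < p" "j' < p"
      moreover have "take m (drop j P) = take m (drop j' P)" using j(3) \<open>j < p\<close> \<open>j' < p\<close> by (simp add: G_def)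
      ultimately have "take (j+m) P = take (j'+m) P"
        using pref_eq[OF len wL PZ PZ] by blast
      then have "length (take (j+m) P) = length (take (j'+m) P)" by simp
      then show ?thesis using \<open>j < p\<close> \<open>j' < p\<close> PZ(3) by simp
    next
      assume "\<not> j < p" "\<not> j' < p"
      moreover have "j-p+1 < p" "j'-p+1 < p" using j(1,2) \<open>\<not> j < p\<close> \<open>\<not> j' < p\<close> by simp_all
      moreover have "take m (drop (j-p+1) Q) = take m (drop (j'-p+1) Q)" using j(3) \<open>\<not> j < p\<close> \<open>\<not> j' < p\<close> by (simp add: G_def)
      ultimately have "take ((j-p+1)+m) Q = take ((j'-p+1)+m) Q"
        using pref_eq[OF len wL QZ QZ] by blast
      then have "length (take ((j-p+1)+m) Q) = length (take ((j'-p+1)+m) Q)" by simp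
      then show ?thesis using \<open>\<not> j < p\<close> \<open>\<not> j' < p\<close> QZ(3) j by simp
    next
      assume a: "j < p" "\<not> j' < p"
      moreover have "j'-p+1 < p" using j(2) a by simp
      moreover have "take m (drop j P) = take m (drop (j'-p+1) Q)" using j(3) a by (simp add: G_def)
      ultimately have e: "take (j+m) P = take ((j'-p+1)+m) Q"
        using pref_eq[OF len wL PZ QZ] by blast
      then have "length (take (j+m) P) = length (take ((j'-p+1)+m) Q)" by simp
      then have "j = j'-p+1" using a PZ(3) QZ(3) j by simp
      then have "m < j + m" using a by simp
      then have "(take (j+m) P)!m = P!m" "(take ((j'-p+1)+m) Q)!m = Q!m" using \<open>j = j'-p+1\<close> by simp_all
      then show ?thesis using e Pm Qm by simp
    next
      assume a: "\<not> j < p" "j' < p"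
      moreover have "j-p+1 < p" using j(1) a by simp
      moreover have "take m (drop j' P) = take m (drop (j-p+1) Q)" using j(3) a by (simp add: G_def)
      ultimately have e: "take (j'+m) P = take ((j-p+1)+m) Q"
        using pref_eq[OF len wL PZ QZ] by blast
      then have "length (take (j'+m) P) = length (take ((j-p+1)+m) Q)" by simp
      then have "j' = j-p+1" using a PZ(3) QZ(3) j by simp
      then have "m < j' + m" using a by simp
      then have "(take (j'+m) P)!m = P!m" "(take ((j-p+1)+m) Q)!m = Q!m" using \<open>j' = j-p+1\<close> by simp_all
      then show ?thesis using e Pm Qm by simp
    qed
  qed
  have "card {..<2*p-1} \<le> card (Fn u m)" using card_inj_on_le[OF Ginj Gin finF] .
  then have "2*p - 1 \<le> m + 1" using card_F[of m] by simp
  then have "m = 0" "p = 1" using pgt by linarith+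
  then have "P!(length P - m - 1) = P!m" using nmp by (simp add: n_def)
  then show False using ne Pm by simp
qed


lemma win_per:
  assumes P: "isPath u w c P" and len: "length w = m"
  and h: "\<forall>s<d+m. u(i+s) = P!(s mod (length P - m))"
  shows "map u [i+d..<i+d+m] = take m (drop (d mod (length P - m)) P)"
proof -
  define p where "p = length P - m"
  have pdef: "length P - m = p" by (simp add: p_def)
  have p1: "p \<ge> 1" and lP: "length P = m + p" using path_basic(4)[OF P len] by (auto simp: pdef[symmetric])
  have r: "d mod p < p" using p1 by simp
  show ?thesis
  proof (rule nth_equalityI)
    show "length (map u [i+d..<i+d+m]) = length (take m (drop (d mod (length P - m)) P))"
      using r lP by (simp add: pdef)
  next
    fix s assume "s < length (map u [i+d..<i+d+m])"
    then have s: "s < m" by simp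
    have "map u [i+d..<i+d+m] ! s = u(i + (d+s))" using s by (simp add: nth_map_upt add.assoc)
    also have "\<dots> = P!((d+s) mod p)" using h s by (simp add: pdef)
    also have "(d+s) mod p = (d mod p + s) mod p" by (simp add: mod_add_left_eq)
    also have "P!((d mod p + s) mod p) = P!(d mod p + s)"
      using Pmod[OF P len, of "d mod p + s"] r s lP by (simp add: pdef)
    also have "\<dots> = take m (drop (d mod (length P - m)) P) ! s" using s r lP by (simp add: pdef)
    finally show "map u [i+d..<i+d+m] ! s = take m (drop (d mod (length P - m)) P) ! s" .
  qed
qed


lemma crux:
  assumes len: "length w = m" and wL: "left_sp u w" and wR: "right_special u w"
  and rc: "\<forall>z\<in>lang u. length z = Suc m \<longrightarrow> rev z \<in> lang u" and pal: "rev w = w"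
  and c: "c = 0 \<or> c = 1"
  shows "c # w @ [1-c] \<in> lang u"
proof (rule ccontr)
  assume nc: "c # w @ [1-c] \<notin> lang u"
  have wc: "w@[c] \<in> lang u" "w@[1-c] \<in> lang u" using wR c by (auto simp: right_special_def)
  obtain P where P: "isPath u w c P" using path_ex[OF len wL wc(1)] by blast
  note pb = path_basic[OF P len]
  define p where "p = length P - m"
  have pdef: "length P - m = p" by (simp add: p_def)
  have p1: "p \<ge> 1" and lP: "length P = m + p" using pb(4) by (auto simp: pdef[symmetric])
  have ret: "P!(p-1) = c" using return_letter[OF P len wL rc pal] by (simp add: pdef)
  have notw: "V = w" if "length V = m" "V@[x] \<in> lang u" "V@[y] \<in> lang u" "x \<noteq> y" for V x y
    using RS_unique[OF uR[OF that(2,3,4)] wR] that(1) len by simp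
  have other: "(1-c) # w @ [1-c] \<in> lang u"
  proof -
    obtain y where y: "y # w @ [1-c] \<in> lang u" using left_ext[OF wc(2)] by blast
    have "y = 0 \<or> y = 1" using letter[OF y] by simp
    then show ?thesis using y nc c by auto
  qed
  have "c # w \<in> lang u" using wL c by (auto simp: left_sp_def)
  then obtain i0 where i0: "\<forall>k<Suc m. (c#w)!k = u(i0+k)" using len by (auto simp: lang_iff)
  define i where "i = Suc i0"
  have ui0: "u i0 = c" using i0[rule_format, of 0] by simp
  have uw: "u(i+k) = w!k" if "k < m" for k using i0[rule_format, of "Suc k"] that by (simp add: i_def)
  have per: "u(i+t) = P!(t mod p)" for t
  proof (induction t rule: less_induct)
    case (less t)
    show ?case
    proof (cases "t < m")
      case True
      have "u(i+t) = w!t" using uw True .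
      also have "\<dots> = (take m P)!t" using pb(1) by simp
      also have "\<dots> = P!t" using True by simp
      also have "\<dots> = P!(t mod p)" using Pmod[OF P len, of t] True lP by (simp add: pdef)
      finally show ?thesis .
    next
      case False
      define d where "d = t - m"
      have td: "t = d + m" using False by (simp add: d_def)
      have h: "\<forall>s<d+m. u(i+s) = P!(s mod (length P - m))" using less.IH td by (simp add: pdef)
      have V: "map u [i+d..<i+d+m] = take m (drop (d mod p) P)"
        using win_per[OF P len h] by (simp add: pdef)
      define r where "r = d mod p"
      have rp: "r < p" using p1 by (simp add: r_def)
      have tmod: "t mod p = (r + m) mod p" using td by (simp add: r_def mod_add_left_eq)
      have Prm: "P!((r + m) mod p) = P!(r+m)"
        using Pmod[OF P len, of "r+m"] rp lP by (simp add: pdef)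
      show ?thesis
      proof (cases "r = 0")
        case False
        have ne: "take m (drop r P) \<noteq> w" using pb(7)[of r] False rp by (simp add: pdef)
        have "map u [i+d..<i+d+Suc m] \<in> lang u" by (rule lang_occ)
        then have a1: "take m (drop r P) @ [u(i+t)] \<in> lang u" using V td by (simp add: r_def add.assoc)
        have "take (Suc m) (drop r P) \<in> lang u" using pb(6) rp lP by (simp add: legal_def)
        moreover have "take (Suc m) (drop r P) = take m (drop r P) @ [P!(r+m)]"
          using rp lP by (simp add: take_Suc_conv_app_nth)
        ultimately have a2: "take m (drop r P) @ [P!(r+m)] \<in> lang u" by simp
        have "length (take m (drop r P)) = m" using rp lP by simp
        then have "u(i+t) = P!(r+m)" using notw[OF _ a1 a2] ne by blast
        then show ?thesis using tmod Prm by simp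
      next
        case True
        have Vw: "map u [i+d..<i+d+m] = w" using V True pb(1) by (simp add: r_def)
        have prev: "u(i0+d) = c"
        proof (cases "d = 0")
          case True then show ?thesis using ui0 by simp
        next
          case False
          have "d - 1 < t" using td False by simp
          then have "u(i+(d-1)) = P!((d-1) mod p)" using less.IH by blast
          also have "(d-1) mod p = p - 1" using mod_pred[of d p] True False p1 by (simp add: r_def)
          finally show ?thesis using ret False by (simp add: i_def)
        qed
        have "c # w @ [u(i+t)] \<in> lang u" unfolding lang_iff
        proof (intro exI[of _ "i0+d"] allI impI)
          fix k assume k: "k < length (c # w @ [u(i+t)])"
          show "(c # w @ [u(i+t)])!k = u(i0+d+k)"
          proof (cases k)
            case 0 then show ?thesis using prev by simp
          next
            case (Suc k')
            show ?thesis
            proof (cases "k' < m")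
              case True
              have "(c # w @ [u(i+t)])!k = w!k'" using Suc True len by (simp add: nth_append)
              also have "\<dots> = map u [i+d..<i+d+m] ! k'" using Vw by simp
              also have "\<dots> = u(i+d+k')" using True by (simp add: nth_map_upt del: upt_Suc)
              also have "\<dots> = u(i0+d+k)" using Suc by (simp add: i_def)
              finally show ?thesis .
            next
              case False
              then have "k' = m" using k Suc len by simp
              then show ?thesis using Suc len td by (simp add: nth_append i_def add.assoc)
            qed
          qed
        qed
        moreover have "u(i+t) = 0 \<or> u(i+t) = 1" using rng by (meson insertE range_subsetD singletonD)
        ultimately have "u(i+t) = c" using nc c by auto
        moreover have "P!(t mod p) = c" using tmod Prm True pb(2) by simp
        ultimately show ?thesis by simp
      qed
    qed
  qed
  obtain j where j: "j \<ge> i" "\<forall>k<length ((1-c) # w @ [1-c]). ((1-c) # w @ [1-c])!k = u(j+k)"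
    using recur[OF other, of i] by blast
  have uj: "u j = 1 - c" using j(2)[rule_format, of 0] by simp
  have wj: "map u [j+1..<j+1+m] = w"
  proof (rule nth_equalityI)
    fix k assume "k < length (map u [j+1..<j+1+m])"
    then have k: "k < m" by (simp del: upt_Suc)
    then have "((1-c) # w @ [1-c])!(Suc k) = u(j + Suc k)" using j(2)[rule_format, of "Suc k"] len by simp
    then show "map u [j+1..<j+1+m] ! k = w!k" using k len by (simp add: nth_append nth_map_upt del: upt_Suc)
  qed (simp add: len del: upt_Suc)
  define d where "d = j + 1 - i"
  have jd: "i + d = j + 1" using j(1) by (simp add: d_def)
  have h: "\<forall>s<d+m. u(i+s) = P!(s mod (length P - m))" using per by (simp add: pdef)
  have "map u [i+d..<i+d+m] = take m (drop (d mod p) P)" using win_per[OF P len h] by (simp add: pdef)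
  then have tw: "take m (drop (d mod p) P) = w" using wj jd by simp
  have "d mod p = 0"
  proof (rule ccontr)
    assume "d mod p \<noteq> 0"
    then show False using pb(7)[of "d mod p"] tw p1 by (simp add: pdef)
  qed
  moreover have d1: "d \<ge> 1" using j(1) by (simp add: d_def)
  ultimately have "(d - 1) mod p = p - 1" using mod_pred[of d p] p1 by simp
  moreover have "j = i + (d-1)" using jd d1 by arith
  then have "u j = u(i + (d-1))" by simp
  ultimately have "u j = c" using per ret by simp
  then show False using uj c by auto
qed


definition rcl :: "nat \<Rightarrow> bool" where
  "rcl k \<longleftrightarrow> (\<forall>z\<in>lang u. length z = k \<longrightarrow> rev z \<in> lang u)"

lemma rcl_all: "rcl k"
proof -
  have "rcl (Suc k)" for k
  proof (induction k)
    case 0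
    show ?case unfolding rcl_def
    proof (intro ballI impI)
      fix z assume "z \<in> lang u" "length z = Suc 0"
      then show "rev z \<in> lang u" by (cases z) auto
    qed
  next
    case (Suc m)
    have rc: "\<forall>z\<in>lang u. length z = Suc m \<longrightarrow> rev z \<in> lang u" using Suc by (simp add: rcl_def)
    show ?case unfolding rcl_def
    proof (intro ballI impI)
      fix z assume z: "z \<in> lang u" "length z = Suc (Suc m)"
      obtain a y where ay: "z = a # y" using z(2) by (cases z) auto
      then have "y \<noteq> []" using z(2) by auto
      then obtain v b where vb: "y = v @ [b]" by (metis rev_exhaust)
      have zz: "z = a # v @ [b]" using ay vb by simp
      have lv: "length v = m" using z(2) zz by simp
      have av: "a # v \<in> lang u" using z(1) zz lang_append1[of "a#v" "[b]"] by simp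
      have vb': "v @ [b] \<in> lang u" using z(1) zz lang_append2[of "[a]" "v@[b]"] by simp
      have 1: "b # rev v \<in> lang u" using rc[rule_format, OF vb'] lv by simp
      have 2: "rev v @ [a] \<in> lang u" using rc[rule_format, OF av] lv by simp
      have rz: "rev z = b # rev v @ [a]" using zz by simp
      show "rev z \<in> lang u"
      proof (cases "right_special u (rev v) \<and> left_sp u (rev v)")
        case False
        then show ?thesis using linegraph[OF 1 2] rz by simp
      next
        case True
        define w where "w = rev v"
        have lw: "length w = m" using lv by (simp add: w_def)
        have wR: "right_special u w" and wL: "left_sp u w" using True by (auto simp: w_def)
        have "rev (0 # w) \<in> lang u" "rev (1 # w) \<in> lang u"
          using rc wL lw by (auto simp: left_sp_def)
        then have rw: "right_special u (rev w)" by (simp add: right_special_def)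
        have pal: "rev w = w" by (rule RS_unique[OF rw wR]) simp
        have "v = rev w" by (simp add: w_def)
        then have vw: "v = w" using pal by simp
        have a01: "a = 0 \<or> a = 1" using letter[OF z(1)] zz by simp
        have b01: "b = 0 \<or> b = 1" using letter[OF z(1)] zz by simp
        show ?thesis
        proof (cases "a = b")
          case True then show ?thesis using z(1) zz vw pal by simp
        next
          case False
          have "b # w @ [1-b] \<in> lang u" using crux[OF lw wL wR rc pal b01] .
          moreover have "1 - b = a" using a01 b01 False by auto
          ultimately show ?thesis using rz vw pal by simp
        qed
      qed
    qed
  qed
  note suc = this
  show ?thesis
  proof (cases k)
    case 0 then show ?thesis by (auto simp: rcl_def)
  next
    case (Suc k') then show ?thesis using suc[of k'] by simp
  qed
qed

lemma rev_left_special_right_special: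
  assumes "left_sp u L"
  shows "right_special u (rev L)"
proof -
  have "rev (0 # L) \<in> lang u" "rev (1 # L) \<in> lang u"
    using rcl_all[of "Suc (length L)"] assms by (auto simp: rcl_def left_sp_def)
  then show ?thesis by (simp add: right_special_def)
qed

end

lemma suffix_same_len: "suffix a y \<Longrightarrow> suffix b y \<Longrightarrow> length a = length b \<Longrightarrow> a = b"
  unfolding suffix_def by (metis append_eq_append_conv)

lemma sig_props:
  assumes r: "range u \<subseteq> {0,1}" and y: "y \<in> lang u" "y \<noteq> []"
  shows "suffix (sig u y) y" "significant u (sig u y)" "last (sig u y) = last y"
proof -
  define S where "S = {s. suffix s y \<and> significant u s}"
  have ly: "[last y] \<in> lang u" using y lang_append2[of "butlast y" "[last y]"] by simp
  have "last y = 0 \<or> last y = 1" using lang_letters[OF r ly] by simp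
  moreover have "suffix [last y] y" unfolding suffix_def using append_butlast_last_id[OF y(2)] by metis
  ultimately have sl: "[last y] \<in> S" using ly
    by (auto simp: S_def significant_def)
  have "S \<subseteq> set (suffixes y)" by (auto simp: S_def)
  then have finS: "finite S" using finite_subset by blast
  define M where "M = Max (length ` S)"
  have "M \<in> length ` S" unfolding M_def using finS sl by (intro Max_in) auto
  then obtain s0 where s0: "s0 \<in> S" "length s0 = M" by blast
  have mx: "\<forall>s'\<in>S. length s' \<le> length s0" using finS s0 by (auto simp: M_def)
  have the: "sig u y = s0" unfolding sig_def
  proof (rule the_equality)
    show "suffix s0 y \<and> significant u s0 \<and> (\<forall>s'. suffix s' y \<and> significant u s' \<longrightarrow> length s' \<le> length s0)"
      using s0 mx by (auto simp: S_def)
  next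
    fix s assume h: "suffix s y \<and> significant u s \<and> (\<forall>s'. suffix s' y \<and> significant u s' \<longrightarrow> length s' \<le> length s)"
    then have "length s0 \<le> length s" using s0 by (auto simp: S_def)
    moreover have "length s \<le> length s0" using h mx by (auto simp: S_def)
    ultimately show "s = s0" using suffix_same_len[of s y s0] h s0 by (auto simp: S_def)
  qed
  show "suffix (sig u y) y" "significant u (sig u y)" using the s0 by (auto simp: S_def)
  have "length s0 \<ge> 1" using mx sl by fastforce
  then have "s0 \<noteq> []" by auto
  moreover obtain x where "y = x @ s0" using s0 by (auto simp: S_def suffix_def)
  ultimately show "last (sig u y) = last y" using the by simp
qed

lemma part1:
  assumes r: "range u \<subseteq> {0,1}" and a: "significant u \<alpha>"
  shows "card {\<beta>. HB_arrow u \<alpha> \<beta>} = 2 \<longleftrightarrow> right_special u \<alpha>"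
proof -
  have al: "\<alpha> \<in> lang u" using a by (simp add: significant_def)
  define E where "E = {b. \<alpha>@[b] \<in> lang u}"
  have B: "{\<beta>. HB_arrow u \<alpha> \<beta>} = (\<lambda>b. sig u (\<alpha>@[b])) ` E"
    using a sig_props(2)[OF r] by (auto simp: HB_arrow_def E_def)
  have "inj_on (\<lambda>b. sig u (\<alpha>@[b])) E"
  proof (rule inj_onI)
    fix b b' assume "b \<in> E" "b' \<in> E" "sig u (\<alpha>@[b]) = sig u (\<alpha>@[b'])"
    then have "last (\<alpha>@[b]) = last (\<alpha>@[b'])" using sig_props(3)[OF r] by (metis E_def mem_Collect_eq snoc_eq_iff_butlast)
    then show "b = b'" by simp
  qed
  then have cB: "card {\<beta>. HB_arrow u \<alpha> \<beta>} = card E" using B card_image by metis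
  have E01: "E \<subseteq> {0,1}"
  proof
    fix b assume "b \<in> E"
    then have "\<alpha>@[b] \<in> lang u" by (simp add: E_def)
    then show "b \<in> {0,1}" using lang_letters[OF r] by fastforce
  qed
  have "card E = 2 \<longleftrightarrow> E = {0,1}"
  proof
    assume "card E = 2"
    then show "E = {0,1}" using E01 by (intro card_subset_eq) auto
  qed simp
  also have "\<dots> \<longleftrightarrow> right_special u \<alpha>" using E01 by (auto simp: E_def right_special_def)
  finally show ?thesis using cB by simp
qed


theorem lemma4p10:
  fixes u l :: "nat \<Rightarrow> nat" and x n :: nat
  assumes "sturmian u"
    and "left_special_seq u l"
    and "x \<in> {0, 1}"
    and "n \<ge> 1"
    and "significant u (x # map l [1..<n])"
  shows "(card {\<beta>. HB_arrow u (x # map l [1..<n]) \<beta>} = 2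
            \<longleftrightarrow> right_special u (x # map l [1..<n]))
       \<and> (right_special u (x # map l [1..<n])
            \<longleftrightarrow> x # map l [1..<n] = rev (map l [1..<n+1]))"
proof -
  interpret sturm u by (rule sturm.intro) (rule assms(1))
  define W where "W = x # map l [1..<n]"
  define L where "L = map l [1..<n+1]"
  have lW: "length W = n" using assms(4) by (simp add: W_def)
  have lL: "length L = n" by (simp add: L_def)
  have LL: "left_sp u L" using assms(2) by (simp add: left_special_seq_def left_sp_def L_def)
  have RL: "right_special u (rev L)" by (rule rev_left_special_right_special[OF LL])
  have p1: "card {\<beta>. HB_arrow u W \<beta>} = 2 \<longleftrightarrow> right_special u W"
    using part1[OF rng] assms(5) by (simp add: W_def)
  have p2: "right_special u W \<longleftrightarrow> W = rev L"
  proof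
    assume "right_special u W"
    then show "W = rev L" by (rule RS_unique[OF _ RL]) (simp add: lW lL)
  next
    assume "W = rev L"
    then show "right_special u W" using RL by simp
  qed
  show ?thesis using p1 p2 by (simp add: W_def L_def)
qed

end
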